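(* Let $G$ be a graph on a Polish space $X$. Then $\mu(G)\leq\aleph_0$ implies $\lambda(G)\leq\aleph_0$, which in turn implies $\chi(G)\leq\aleph_0$.
   Context: A graph $G$ on $X$ is a symmetric irreflexive relation. A $G$-anticlique is a set with no two distinct $G$-connected points. The chromatic number $\chi(G)$ is the smallest cardinality of a collection of $G$-anticliques covering $X$. An orientation of $G$ is an antisymmetric relation $o$ whose symmetrization equals $G$; the $o$-outflow of $x$ is $\{y\colon\langle x,y\rangle\in o\}$. The coloring number $\mu(G)$ is the smallest cardinal $\kappa$ such that there is an orientation of $G$ in which the outflow of every vertex has size $<\kappa$ (so $\mu(G)\leq\aleph_0$ means there is an orientation with all outflows finite). A set $A\subset X$ is $G$-loose if for every $x\in X$ there is an open neighborhood $O$ of $x$ containing no elements of $A$ that are $G$-connected to $x$; the loose number $\lambda(G)$ is the smallest cardinality of a collection of $G$-loose sets covering $X$. *)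

theory Defs
  imports "HOL-Analysis.Analysis"
begin

definition is_graph :: "('a \<Rightarrow> 'a \<Rightarrow> bool) \<Rightarrow> bool" where
  "is_graph G \<longleftrightarrow> (\<forall>x y. G x y \<longrightarrow> G y x) \<and> (\<forall>x. \<not> G x x)"

definition anticlique :: "('a \<Rightarrow> 'a \<Rightarrow> bool) \<Rightarrow> 'a set \<Rightarrow> bool" where
  "anticlique G A \<longleftrightarrow> (\<forall>x\<in>A. \<forall>y\<in>A. x \<noteq> y \<longrightarrow> \<not> G x y)"

definition orientation :: "('a \<Rightarrow> 'a \<Rightarrow> bool) \<Rightarrow> ('a \<Rightarrow> 'a \<Rightarrow> bool) \<Rightarrow> bool" where
  "orientation G R \<longleftrightarrow> (\<forall>x y. R x y \<and> R y x \<longrightarrow> x = y) \<and> (\<forall>x y. G x y \<longleftrightarrow> (R x y \<or> R y x))"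

definition outflow :: "('a \<Rightarrow> 'a \<Rightarrow> bool) \<Rightarrow> 'a \<Rightarrow> 'a set" where
  "outflow R x = {y. R x y}"

definition loose :: "('a::topological_space \<Rightarrow> 'a \<Rightarrow> bool) \<Rightarrow> 'a set \<Rightarrow> bool" where
  "loose G A \<longleftrightarrow> (\<forall>x. \<exists>U. open U \<and> x \<in> U \<and> (\<forall>a\<in>A \<inter> U. \<not> G x a))"

text \<open>mu(G) \<le> aleph_0: some orientation has all outflows finite.\<close>
definition coloring_number_le_aleph0 :: "('a \<Rightarrow> 'a \<Rightarrow> bool) \<Rightarrow> bool" where
  "coloring_number_le_aleph0 G \<longleftrightarrow> (\<exists>R. orientation G R \<and> (\<forall>x. finite (outflow R x)))"

definition loose_number_le_aleph0 :: "('a::topological_space \<Rightarrow> 'a \<Rightarrow> bool) \<Rightarrow> bool" where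
  "loose_number_le_aleph0 G \<longleftrightarrow>
     (\<exists>\<A>. countable \<A> \<and> (\<forall>A\<in>\<A>. loose G A) \<and> \<Union>\<A> = UNIV)"

definition chromatic_number_le_aleph0 :: "('a \<Rightarrow> 'a \<Rightarrow> bool) \<Rightarrow> bool" where
  "chromatic_number_le_aleph0 G \<longleftrightarrow>
     (\<exists>\<A>. countable \<A> \<and> (\<forall>A\<in>\<A>. anticlique G A) \<and> \<Union>\<A> = UNIV)"

end

theory Submission
  imports Defs
begin

theorem theorem3p4:
  fixes G :: "'a::polish_space \<Rightarrow> 'a \<Rightarrow> bool"
  assumes "is_graph G"
  shows "(coloring_number_le_aleph0 G \<longrightarrow> loose_number_le_aleph0 G)
       \<and> (loose_number_le_aleph0 G \<longrightarrow> chromatic_number_le_aleph0 G)"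
proof -
  obtain \<B> :: "'a set set" where cB: "countable \<B>" and bB: "topological_basis \<B>"
    using ex_countable_basis by blast
  have irr: "\<not> G x x" for x using assms unfolding is_graph_def by blast
  show ?thesis
  proof (intro conjI impI)
    assume "coloring_number_le_aleph0 G"
    then obtain R where oR: "orientation G R" and fin: "\<And>x. finite (outflow R x)"
      unfolding coloring_number_le_aleph0_def by blast
    have GR: "G x y \<longleftrightarrow> R x y \<or> R y x" for x y using oR unfolding orientation_def by blast
    have notin: "x \<notin> outflow R x" for x using GR[of x x] irr[of x] unfolding outflow_def by blast
    define \<A> where "\<A> = (\<lambda>B. {x. x \<in> B \<and> closure B \<inter> outflow R x = {}}) ` \<B>"
    have c1: "countable \<A>" unfolding \<A>_def using cB by simp
    have c2: "\<Union>\<A> = UNIV"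
    proof -
      have "\<exists>B\<in>\<B>. x \<in> B \<and> closure B \<inter> outflow R x = {}" for x
      proof -
        have op: "open (- outflow R x)" by (rule open_Compl[OF finite_imp_closed[OF fin]])
        have xin: "x \<in> - outflow R x" using notin by simp
        obtain e where e: "e > 0" "cball x e \<subseteq> - outflow R x"
          using op xin unfolding open_contains_cball by blast
        obtain V where V: "V \<in> \<B>" "x \<in> V" "V \<subseteq> ball x e"
          using topological_basisE[OF bB open_ball centre_in_ball[THEN iffD2, OF e(1)]] by blast
        have "closure V \<subseteq> cball x e"
          by (rule closure_minimal[OF order_trans[OF V(3) ball_subset_cball] closed_cball])
        then show ?thesis using V e by blast
      qed
      then show ?thesis unfolding \<A>_def by blast
    qed
    have c3: "loose G A" if Ain: "A \<in> \<A>" for A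
    proof -
      obtain B where "A = (\<lambda>B. {x. x \<in> B \<and> closure B \<inter> outflow R x = {}}) B"
        using Ain unfolding \<A>_def by (rule imageE)
      then have B: "A = {x. x \<in> B \<and> closure B \<inter> outflow R x = {}}" by simp
      show ?thesis unfolding loose_def
      proof
        fix z
        define U where "U = - outflow R z \<inter> (if z \<in> closure B then UNIV else - closure B)"
        have "open (- outflow R z)" by (rule open_Compl[OF finite_imp_closed[OF fin]])
        moreover have "open (if z \<in> closure B then UNIV else - closure B)" by (simp add: open_Compl)
        ultimately have "open U" unfolding U_def by (rule open_Int)
        moreover have "z \<in> U" unfolding U_def using notin by auto
        moreover have "\<forall>a\<in>A \<inter> U. \<not> G z a"
        proof (intro ballI notI)
          fix a assume a: "a \<in> A \<inter> U" and g: "G z a"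
          have "a \<notin> outflow R z" using a unfolding U_def by auto
          then have "R a z" using GR g unfolding outflow_def by blast
          then have "z \<in> outflow R a" unfolding outflow_def by simp
          then have "z \<notin> closure B" using a B by blast
          then have "a \<notin> closure B" using a unfolding U_def by auto
          moreover have "a \<in> B" using a B by blast
          ultimately show False using closure_subset by blast
        qed
        ultimately show "\<exists>U. open U \<and> z \<in> U \<and> (\<forall>a\<in>A \<inter> U. \<not> G z a)" by blast
      qed
    qed
    show "loose_number_le_aleph0 G" unfolding loose_number_le_aleph0_def
      by (rule exI[of _ \<A>]) (intro conjI ballI c1 c2 c3)
  next
    assume "loose_number_le_aleph0 G"
    then obtain \<A> where h: "countable \<A> \<and> (\<forall>A\<in>\<A>. loose G A) \<and> \<Union>\<A> = UNIV"
      unfolding loose_number_le_aleph0_def by (rule exE)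
    note cA = h[THEN conjunct1] and lA = h[THEN conjunct2, THEN conjunct1]
      and uA = h[THEN conjunct2, THEN conjunct2]
    define \<C> where "\<C> = (\<lambda>(A,B). {a\<in>A. a\<in>B \<and> (\<forall>a'\<in>A\<inter>B. \<not> G a a')}) ` (\<A> \<times> \<B>)"
    have d1: "countable \<C>" unfolding \<C>_def using cA cB by simp
    have d2: "anticlique G C" if "C \<in> \<C>" for C
      using that unfolding \<C>_def anticlique_def by auto
    have d3: "\<Union>\<C> = UNIV"
    proof -
      have "x \<in> \<Union>\<C>" for x
      proof -
        have "x \<in> \<Union>\<A>" using uA by simp
        then obtain A where A: "x \<in> A" "A \<in> \<A>" by (rule UnionE)
        have "loose G A" using lA A(2) by (rule bspec)
        then have "\<exists>U. open U \<and> x \<in> U \<and> (\<forall>a\<in>A \<inter> U. \<not> G x a)"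
          unfolding loose_def by (rule spec)
        then obtain U where U: "open U" "x \<in> U" "\<forall>a\<in>A \<inter> U. \<not> G x a"
          by (elim exE conjE)
        obtain V where V: "V \<in> \<B>" "x \<in> V" "V \<subseteq> U"
          using topological_basisE[OF bB U(1) U(2)] by blast
        have "x \<in> {a\<in>A. a\<in>V \<and> (\<forall>a'\<in>A\<inter>V. \<not> G a a')}" using A V U by blast
        moreover have "{a\<in>A. a\<in>V \<and> (\<forall>a'\<in>A\<inter>V. \<not> G a a')} \<in> \<C>"
          unfolding \<C>_def using A(2) V(1)
          by (intro image_eqI[of _ _ "(A,V)"]) auto
        ultimately show ?thesis by blast
      qed
      then show ?thesis by blast
    qed
    show "chromatic_number_le_aleph0 G" unfolding chromatic_number_le_aleph0_def
      by (rule exI[of _ \<C>]) (intro conjI ballI d1 d2 d3)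
  qed
qed

end
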